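(* Let $\Gamma$ be a layered graph with unique minimal vertex $*$. The following are equivalent: (i) $\Gamma$ is uniform. (ii) For any vertices $v,x,x'$ with $v\gtrdot x$ and $v\gtrdot x'$, there exist vertices $x_0,\dots,x_s$ and $y_1,\dots,y_s$ such that $x_0=x$, $x_s=x'$, $v\gtrdot x_i$ for all $0\le i\le s$, and $x_{i-1}\gtrdot y_i$ and $x_i\gtrdot y_i$ for all $1\le i\le s$. (iii) For any two vertex paths $(v_1,\dots,v_n)$ and $(w_1,\dots,w_n)$ with $v_1=w_1$ and $v_n=w_n=*$, there is a sequence of vertex paths $\pi_1,\dots,\pi_k$, each starting at $v_1$ and ending at $*$, with $\pi_1=(v_1,\dots,v_n)$, $\pi_k=(w_1,\dots,w_n)$, such that for $1\le i<k$ the paths $\pi_i$ and $\pi_{i+1}$ differ in at most one vertex.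
   Context: A layered graph is a finite directed graph $\Gamma=(V,E)$ with $V=\bigsqcup_{i=0}^{N}V_i$ such that every edge from $V_i$ goes to $V_{i-1}$; $V_{\ge k}=\bigsqcup_{i\ge k}V_i$, $S(v)=\{w:(v,w)\in E\}$, we write $v\gtrdot w$ for $(v,w)\in E$, every vertex outside $V_0$ has $S(v)\ne\emptyset$, and $V_0=\{*\}$. A vertex path is a sequence $(v_1,\dots,v_n)$ with $v_i\gtrdot v_{i+1}$. For $v\in V$, let $\sim_v$ be the equivalence relation on $S(v)$ that is the transitive closure of the relation $w\approx_v u$ iff $S(w)\cap S(u)\ne\emptyset$ (together with reflexivity). $\Gamma$ is uniform if for every $v\in V_{\ge2}$ all elements of $S(v)$ are $\sim_v$-equivalent. *)

theory Defs
  imports Main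
begin

text \<open>A layered graph: finite vertex set V, edge set E, layer function lvl
  (v \<in> V_i iff lvl v = i), and unique minimal vertex star (V_0 = {star}).\<close>
definition layered_graph :: "'a set \<Rightarrow> ('a \<times> 'a) set \<Rightarrow> ('a \<Rightarrow> nat) \<Rightarrow> 'a \<Rightarrow> bool" where
  "layered_graph V E lvl star \<longleftrightarrow>
     finite V \<and> E \<subseteq> V \<times> V \<and>
     (\<forall>(v, w) \<in> E. lvl v = Suc (lvl w)) \<and>
     (\<forall>v \<in> V. lvl v \<noteq> 0 \<longrightarrow> (\<exists>w. (v, w) \<in> E)) \<and>
     {v \<in> V. lvl v = 0} = {star}"

definition succs :: "('a \<times> 'a) set \<Rightarrow> 'a \<Rightarrow> 'a set" where
  "succs E v = {w. (v, w) \<in> E}"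

definition approx_rel :: "('a \<times> 'a) set \<Rightarrow> 'a \<Rightarrow> ('a \<times> 'a) set" where
  "approx_rel E v = {(w, u). w \<in> succs E v \<and> u \<in> succs E v \<and> succs E w \<inter> succs E u \<noteq> {}}"

definition sim_rel :: "('a \<times> 'a) set \<Rightarrow> 'a \<Rightarrow> 'a \<Rightarrow> 'a \<Rightarrow> bool" where
  "sim_rel E v w u \<longleftrightarrow> w \<in> succs E v \<and> u \<in> succs E v \<and> (w, u) \<in> (approx_rel E v)\<^sup>*"

definition uniform :: "'a set \<Rightarrow> ('a \<times> 'a) set \<Rightarrow> ('a \<Rightarrow> nat) \<Rightarrow> bool" where
  "uniform V E lvl \<longleftrightarrow>
     (\<forall>v \<in> V. lvl v \<ge> 2 \<longrightarrow> (\<forall>w \<in> succs E v. \<forall>u \<in> succs E v. sim_rel E v w u))"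

definition vertex_path :: "'a set \<Rightarrow> ('a \<times> 'a) set \<Rightarrow> 'a list \<Rightarrow> bool" where
  "vertex_path V E p \<longleftrightarrow> p \<noteq> [] \<and> set p \<subseteq> V \<and>
     (\<forall>i. Suc i < length p \<longrightarrow> (p ! i, p ! Suc i) \<in> E)"

definition differ_at_most_one :: "'a list \<Rightarrow> 'a list \<Rightarrow> bool" where
  "differ_at_most_one p q \<longleftrightarrow> length p = length q \<and>
     card {j. j < length p \<and> p ! j \<noteq> q ! j} \<le> 1"

end

theory Submission
  imports Defs
begin

lemma vp_single: "vertex_path V E [v] \<longleftrightarrow> v \<in> V"
  by (auto simp: vertex_path_def)

lemma vp_cons: "p \<noteq> [] \<Longrightarrow> vertex_path V E (v # p) \<longleftrightarrow> v \<in> V \<and> (v, hd p) \<in> E \<and> vertex_path V E p"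
proof
  assume p: "p \<noteq> []" and h: "vertex_path V E (v # p)"
  have "Suc 0 < length (v # p)" using p by simp
  then have "((v#p) ! 0, (v#p) ! Suc 0) \<in> E" using h unfolding vertex_path_def by blast
  then have "(v, hd p) \<in> E" using p by (simp add: hd_conv_nth)
  moreover have "\<forall>i. Suc i < length p \<longrightarrow> (p ! i, p ! Suc i) \<in> E"
  proof (intro allI impI)
    fix i assume "Suc i < length p"
    then have "Suc (Suc i) < length (v#p)" by simp
    then show "(p ! i, p ! Suc i) \<in> E" using h unfolding vertex_path_def by (metis nth_Cons_Suc)
  qed
  ultimately show "v \<in> V \<and> (v, hd p) \<in> E \<and> vertex_path V E p" using h p unfolding vertex_path_def by auto
next
  assume p: "p \<noteq> []" and h: "v \<in> V \<and> (v, hd p) \<in> E \<and> vertex_path V E p"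
  show "vertex_path V E (v # p)" unfolding vertex_path_def
  proof (intro conjI allI impI)
    show "set (v # p) \<subseteq> V" using h unfolding vertex_path_def by auto
    fix i assume i: "Suc i < length (v # p)"
    show "((v # p) ! i, (v # p) ! Suc i) \<in> E"
    proof (cases i)
      case 0 then show ?thesis using h p by (simp add: hd_conv_nth)
    next
      case (Suc j) then show ?thesis using h i unfolding vertex_path_def by auto
    qed
  qed simp
qed

lemma dam_iff: "differ_at_most_one p q \<longleftrightarrow> length p = length q \<and> (\<exists>k. \<forall>j<length p. j \<noteq> k \<longrightarrow> p ! j = q ! j)"
proof -
  let ?S = "{j. j < length p \<and> p ! j \<noteq> q ! j}"
  have fin: "finite ?S" by simp
  have "card ?S \<le> 1 \<longleftrightarrow> (\<exists>k. ?S \<subseteq> {k})"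
  proof
    assume "card ?S \<le> 1"
    then have "\<forall>a\<in>?S. \<forall>b\<in>?S. a = b" using card_le_Suc0_iff_eq[OF fin] by simp
    then show "\<exists>k. ?S \<subseteq> {k}" by blast
  next
    assume "\<exists>k. ?S \<subseteq> {k}"
    then obtain k where "?S \<subseteq> {k}" by blast
    then show "card ?S \<le> 1" using card_mono[of "{k}" ?S] by simp
  qed
  then show ?thesis unfolding differ_at_most_one_def by blast
qed

definition valid where "valid V E star p \<longleftrightarrow> vertex_path V E p \<and> last p = star"

lemma lg_facts:
  assumes "layered_graph V E lvl star"
  shows "star \<in> V" "lvl star = 0" "\<And>v. v \<in> V \<Longrightarrow> lvl v = 0 \<Longrightarrow> v = star"
    "\<And>v w. (v, w) \<in> E \<Longrightarrow> lvl v = Suc (lvl w)" "\<And>v w. (v,w) \<in> E \<Longrightarrow> v \<in> V \<and> w \<in> V"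
    "\<And>v. v \<in> V \<Longrightarrow> lvl v \<noteq> 0 \<Longrightarrow> \<exists>w. (v, w) \<in> E"
  using assms unfolding layered_graph_def by auto

lemma valid_length:
  assumes lg: "layered_graph V E lvl star"
  shows "valid V E star p \<Longrightarrow> length p = Suc (lvl (hd p))"
proof (induction p)
  case Nil then show ?case by (simp add: valid_def vertex_path_def)
next
  case (Cons v p)
  show ?case
  proof (cases "p = []")
    case True then show ?thesis using Cons.prems lg_facts(2)[OF lg] by (simp add: valid_def)
  next
    case False
    then have "valid V E star p" "(v, hd p) \<in> E" using Cons.prems vp_cons[OF False] by (auto simp: valid_def)
    then show ?thesis using Cons.IH lg_facts(4)[OF lg, of v "hd p"] by simp
  qed
qed

lemma valid_exists:
  assumes lg: "layered_graph V E lvl star"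
  shows "v \<in> V \<Longrightarrow> \<exists>p. valid V E star p \<and> hd p = v"
proof (induction "lvl v" arbitrary: v)
  case 0
  then have "v = star" using lg_facts(3)[OF lg, of v] by simp
  then show ?case using 0 by (intro exI[of _ "[v]"]) (simp add: valid_def vp_single)
next
  case (Suc n)
  then obtain w where w: "(v, w) \<in> E" using lg_facts(6)[OF lg] by force
  then have "lvl w = n" "w \<in> V" using Suc.hyps lg_facts(4,5)[OF lg w] by auto
  then obtain p where p: "valid V E star p" "hd p = w" using Suc.hyps by blast
  then have "p \<noteq> []" by (auto simp: valid_def vertex_path_def)
  then show ?case using p w Suc.prems vp_cons[of p V E v] by (intro exI[of _ "v # p"]) (auto simp: valid_def)
qed

definition Mv where "Mv V E star = {(p, q). valid V E star p \<and> valid V E star q \<and> hd p = hd q \<and> differ_at_most_one p q}"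

lemma M_list:
  assumes "(p, q) \<in> (Mv V E star)\<^sup>*" "valid V E star q"
  shows "\<exists>\<pi>s. \<pi>s \<noteq> [] \<and> hd \<pi>s = p \<and> last \<pi>s = q \<and>
                (\<forall>\<pi> \<in> set \<pi>s. vertex_path V E \<pi> \<and> hd \<pi> = hd p \<and> last \<pi> = star) \<and>
                (\<forall>i. Suc i < length \<pi>s \<longrightarrow> differ_at_most_one (\<pi>s ! i) (\<pi>s ! Suc i))"
  using assms(1)
proof (induction rule: converse_rtrancl_induct)
  case base
  have "vertex_path V E q" "last q = star" using assms(2) unfolding valid_def by simp_all
  then show ?case by (intro exI[of _ "[q]"]) simp
next
  case (step p r)
  from step.IH obtain \<pi>s where IH: "\<pi>s \<noteq> [] \<and> hd \<pi>s = r \<and> last \<pi>s = q \<and>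
                (\<forall>\<pi> \<in> set \<pi>s. vertex_path V E \<pi> \<and> hd \<pi> = hd r \<and> last \<pi> = star) \<and>
                (\<forall>i. Suc i < length \<pi>s \<longrightarrow> differ_at_most_one (\<pi>s ! i) (\<pi>s ! Suc i))" ..
  have pr: "valid V E star p" "hd p = hd r" "differ_at_most_one p r" using step.hyps(1) by (auto simp: Mv_def)
  show ?case
  proof (intro exI[of _ "p # \<pi>s"] conjI allI impI)
    fix i assume i: "Suc i < length (p # \<pi>s)"
    show "differ_at_most_one ((p # \<pi>s) ! i) ((p # \<pi>s) ! Suc i)"
    proof (cases i)
      case 0
      have "\<pi>s ! 0 = r" using IH by (simp add: hd_conv_nth[symmetric])
      then show ?thesis using pr 0 by simp
    next
      case (Suc j) then show ?thesis using IH i by simp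
    qed
  next
    show "\<forall>\<pi> \<in> set (p # \<pi>s). vertex_path V E \<pi> \<and> hd \<pi> = hd p \<and> last \<pi> = star"
    proof
      fix \<pi> assume "\<pi> \<in> set (p # \<pi>s)"
      then have "\<pi> = p \<or> \<pi> \<in> set \<pi>s" by simp
      then show "vertex_path V E \<pi> \<and> hd \<pi> = hd p \<and> last \<pi> = star"
      proof
        assume "\<pi> = p" then show ?thesis using pr(1) unfolding valid_def by simp
      next
        assume "\<pi> \<in> set \<pi>s" then show ?thesis using IH pr(2) by simp
      qed
    qed
  next
    show "last (p # \<pi>s) = q" using IH by simp
  qed simp_all
qed

lemma valid_ne: "valid V E star p \<Longrightarrow> p \<noteq> []" by (simp add: valid_def vertex_path_def)

lemma valid_cons: "p \<noteq> [] \<Longrightarrow> valid V E star (v # p) \<longleftrightarrow> v \<in> V \<and> (v, hd p) \<in> E \<and> valid V E star p"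
  using vp_cons[of p V E v] by (auto simp: valid_def)

lemma M_hd: "(p, q) \<in> (Mv V E star)\<^sup>* \<Longrightarrow> hd q = hd p"
  by (induction rule: rtrancl_induct) (auto simp: Mv_def)

lemma dam_cons: "differ_at_most_one p q \<Longrightarrow> differ_at_most_one (v # p) (v # q)"
proof -
  assume "differ_at_most_one p q"
  then obtain k where k: "length p = length q" "\<forall>j<length p. j \<noteq> k \<longrightarrow> p ! j = q ! j" by (auto simp: dam_iff)
  have "\<forall>j<length (v#p). j \<noteq> Suc k \<longrightarrow> (v#p) ! j = (v#q) ! j"
  proof (intro allI impI)
    fix j assume "j < length (v#p)" "j \<noteq> Suc k"
    then show "(v#p) ! j = (v#q) ! j" using k by (cases j) auto
  qed
  then show ?thesis using k by (auto simp: dam_iff)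
qed

lemma M_cons:
  assumes "(p, q) \<in> (Mv V E star)\<^sup>*" "valid V E star p" "v \<in> V" "(v, hd p) \<in> E"
  shows "(v # p, v # q) \<in> (Mv V E star)\<^sup>*"
  using assms(1)
proof (induction rule: rtrancl_induct)
  case base then show ?case by simp
next
  case (step q r)
  have h: "hd q = hd p" using step.hyps(1) by (rule M_hd)
  have qr: "valid V E star q" "valid V E star r" "hd q = hd r" "differ_at_most_one q r"
    using step.hyps(2) by (auto simp: Mv_def)
  have "(v # q, v # r) \<in> Mv V E star"
    unfolding Mv_def using qr h assms valid_ne[of V E star q] valid_ne[of V E star r]
    by (auto simp: valid_cons dam_cons)
  then show ?case using step.IH by simp
qed

lemma dam_pos1: "differ_at_most_one (v # x # r) (v # y # r)"
proof -
  have "\<forall>j<length (v # x # r). j \<noteq> 1 \<longrightarrow> (v # x # r) ! j = (v # y # r) ! j"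
  proof (intro allI impI)
    fix j :: nat assume "j \<noteq> 1"
    then show "(v # x # r) ! j = (v # y # r) ! j"
      by (cases j; cases "j - 1") auto
  qed
  then show ?thesis by (auto simp: dam_iff)
qed

lemma main_conn:
  assumes lg: "layered_graph V E lvl star" and un: "uniform V E lvl"
  shows "valid V E star p \<Longrightarrow> valid V E star q \<Longrightarrow> hd p = hd q \<Longrightarrow> (p, q) \<in> (Mv V E star)\<^sup>*"
proof (induction "length p" arbitrary: p q rule: less_induct)
  case less
  note L = lg_facts[OF lg]
  have lens: "length p = length q" using valid_length[OF lg] less.prems by simp
  show ?case
  proof (cases "length p = 1")
    case True
    then have "p = q" using lens less.prems(3) by (cases p; cases q) auto
    then show ?thesis by simp
  next
    case False
    have "p \<noteq> []" "q \<noteq> []" using valid_ne[OF less.prems(1)] valid_ne[OF less.prems(2)] by simp_all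
    then obtain v p' q' where pq: "p = v # p'" "q = v # q'" using less.prems(3)
      by (cases p; cases q) auto
    then have ne: "p' \<noteq> []" "q' \<noteq> []" using False lens by auto
    have vp: "v \<in> V" "(v, hd p') \<in> E" "valid V E star p'" "(v, hd q') \<in> E" "valid V E star q'"
      using less.prems pq ne by (simp_all add: valid_cons)
    have IH: "\<And>a b. valid V E star a \<Longrightarrow> valid V E star b \<Longrightarrow> hd a = hd b \<Longrightarrow> length a = length p' \<Longrightarrow> (a, b) \<in> (Mv V E star)\<^sup>*"
      using less.hyps pq by auto
    have chain: "(hd p', hd q') \<in> (approx_rel E v)\<^sup>*"
    proof (cases "lvl v \<ge> 2")
      case True
      have "sim_rel E v (hd p') (hd q')" using un vp(1) True vp(2) vp(4) unfolding uniform_def succs_def by blast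
      then show ?thesis by (simp add: sim_rel_def)
    next
      case False
      have "lvl (hd p') = 0" "lvl (hd q') = 0" using L(4)[OF vp(2)] L(4)[OF vp(4)] False by simp_all
      moreover have "hd p' \<in> V" "hd q' \<in> V" using L(5)[OF vp(2)] L(5)[OF vp(4)] by simp_all
      ultimately have "hd p' = star" "hd q' = star" using L(3)[of "hd p'"] L(3)[of "hd q'"] by simp_all
      then show ?thesis by simp
    qed
    have CL: "\<And>x. (hd p', x) \<in> (approx_rel E v)\<^sup>* \<Longrightarrow> (\<forall>r. valid V E star r \<and> hd r = x \<longrightarrow> (p, v # r) \<in> (Mv V E star)\<^sup>*)"
    proof -
      fix x assume "(hd p', x) \<in> (approx_rel E v)\<^sup>*"
      then show "\<forall>r. valid V E star r \<and> hd r = x \<longrightarrow> (p, v # r) \<in> (Mv V E star)\<^sup>*"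
      proof (induction rule: rtrancl_induct)
        case base
        show ?case
        proof (intro allI impI)
          fix r assume r: "valid V E star r \<and> hd r = hd p'"
          have "length r = length p'" using r vp valid_length[OF lg] by simp
          then have "(p', r) \<in> (Mv V E star)\<^sup>*" using IH[of p' r] r vp by simp
          then show "(p, v # r) \<in> (Mv V E star)\<^sup>*" using M_cons[of p' r V E star v] vp pq by simp
        qed
      next
        case (step x x2)
        obtain y where y: "(x, y) \<in> E" "(x2, y) \<in> E" "(v, x) \<in> E" "(v, x2) \<in> E"
          using step.hyps(2) unfolding approx_rel_def succs_def by blast
        have "y \<in> V" using L(5)[OF y(1)] by simp
        then obtain r0 where r0: "valid V E star r0" "hd r0 = y" using valid_exists[OF lg, of y] by blast
        have r0ne: "r0 \<noteq> []" using valid_ne[OF r0(1)] .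
        have v1: "valid V E star (x # r0)" using r0 r0ne y L(5)[OF y(1)] L(5)[OF y(2)] by (simp add: valid_cons)
        have v2: "valid V E star (x2 # r0)" using r0 r0ne y L(5)[OF y(1)] L(5)[OF y(2)] by (simp add: valid_cons)
        have s1: "(p, v # x # r0) \<in> (Mv V E star)\<^sup>*" using step.IH v1 by simp
        have "(v # x # r0, v # x2 # r0) \<in> Mv V E star"
          unfolding Mv_def using v1 v2 dam_pos1[of v x r0 x2] y(3,4) vp(1) valid_ne[OF v1] valid_ne[OF v2] by (simp add: valid_cons)
        with s1 have s2: "(p, v # x2 # r0) \<in> (Mv V E star)\<^sup>*" by (rule rtrancl_into_rtrancl)
        show ?case
        proof (intro allI impI)
          fix r assume r: "valid V E star r \<and> hd r = x2"
          have "length (x2 # r0) = length p'" using valid_length[OF lg v2] valid_length[OF lg vp(3)] L(4)[OF y(4)] L(4)[OF vp(2)] by simp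
          then have "(x2 # r0, r) \<in> (Mv V E star)\<^sup>*" using IH[of "x2 # r0" r] r v2 by simp
          then have "(v # x2 # r0, v # r) \<in> (Mv V E star)\<^sup>*" using M_cons[of "x2 # r0" r V E star v] vp y v2 by simp
          with s2 show "(p, v # r) \<in> (Mv V E star)\<^sup>*" by (rule rtrancl_trans)
        qed
      qed
    qed
    have "(p, v # q') \<in> (Mv V E star)\<^sup>*" using CL[OF chain] vp(5) by blast
    then show ?thesis using pq by simp
  qed
qed

lemma unif_imp_ii:
  assumes lg: "layered_graph V E lvl star" and un: "uniform V E lvl"
    and e: "(v, x) \<in> E" "(v, x') \<in> E"
  shows "\<exists>(s::nat) (xs::nat \<Rightarrow> 'a) (ys::nat \<Rightarrow> 'a).
                xs 0 = x \<and> xs s = x' \<and> (\<forall>i \<le> s. (v, xs i) \<in> E) \<and>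
                (\<forall>i \<in> {1..s}. (xs (i - 1), ys i) \<in> E \<and> (xs i, ys i) \<in> E)"
proof -
  note L = lg_facts[OF lg]
  have chain: "(x, x') \<in> (approx_rel E v)\<^sup>*"
  proof (cases "lvl v \<ge> 2")
    case True
    have "sim_rel E v x x'" using un L(5)[OF e(1)] True e unfolding uniform_def succs_def by blast
    then show ?thesis by (simp add: sim_rel_def)
  next
    case False
    have "lvl x = 0" "lvl x' = 0" using L(4)[OF e(1)] L(4)[OF e(2)] False by simp_all
    moreover have "x \<in> V" "x' \<in> V" using L(5)[OF e(1)] L(5)[OF e(2)] by simp_all
    ultimately have "x = star" "x' = star" using L(3)[of x] L(3)[of x'] by simp_all
    then show ?thesis by simp
  qed
  show ?thesis using chain
  proof (induction rule: rtrancl_induct)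
    case base
    show ?case by (rule exI[of _ 0], rule exI[of _ "\<lambda>_. x"]) (use e in auto)
  next
    case (step z z2)
    from step.IH obtain s :: nat and xs ys where H: "xs 0 = x" "xs s = z" "\<forall>i \<le> s. (v, xs i) \<in> E"
      "\<forall>i \<in> {1..s}. (xs (i - 1), ys i) \<in> E \<and> (xs i, ys i) \<in> E" by blast
    obtain y where y: "(z, y) \<in> E" "(z2, y) \<in> E" "(v, z2) \<in> E"
      using step.hyps(2) unfolding approx_rel_def succs_def by blast
    define xs' where "xs' = xs(Suc s := z2)"
    define ys' where "ys' = ys(Suc s := y)"
    have A: "xs' 0 = x" "xs' (Suc s) = z2" using H unfolding xs'_def by simp_all
    have C: "\<forall>i \<le> Suc s. (v, xs' i) \<in> E"
    proof (intro allI impI)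
      fix i assume "i \<le> Suc s" then show "(v, xs' i) \<in> E" using H y unfolding xs'_def by (cases "i = Suc s") auto
    qed
    have D: "\<forall>i \<in> {1..Suc s}. (xs' (i - 1), ys' i) \<in> E \<and> (xs' i, ys' i) \<in> E"
    proof
      fix i assume i: "i \<in> {1..Suc s}"
      show "(xs' (i - 1), ys' i) \<in> E \<and> (xs' i, ys' i) \<in> E"
      proof (cases "i = Suc s")
        case True then show ?thesis using H y unfolding xs'_def ys'_def by simp
      next
        case False
        then have "i \<in> {1..s}" "i - 1 \<noteq> Suc s" using i by auto
        then show ?thesis using H False unfolding xs'_def ys'_def by simp
      qed
    qed
    show ?case using A C D by (intro exI[of _ "Suc s"] exI[of _ xs'] exI[of _ ys']) simp
  qed
qed

lemma ii_imp_unif: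
  assumes H: "\<forall>v x x'. (v, x) \<in> E \<and> (v, x') \<in> E \<longrightarrow>
             (\<exists>(s::nat) (xs::nat \<Rightarrow> 'a) (ys::nat \<Rightarrow> 'a).
                xs 0 = x \<and> xs s = x' \<and> (\<forall>i \<le> s. (v, xs i) \<in> E) \<and>
                (\<forall>i \<in> {1..s}. (xs (i - 1), ys i) \<in> E \<and> (xs i, ys i) \<in> E))"
  shows "uniform V E lvl"
  unfolding uniform_def sim_rel_def
proof (intro ballI impI conjI)
  fix v w u assume w: "w \<in> succs E v" and u: "u \<in> succs E v"
  have vw: "(v, w) \<in> E" "(v, u) \<in> E" using w u unfolding succs_def by simp_all
  from H[rule_format, OF conjI[OF vw]] obtain s :: nat and xs ys where X: "xs 0 = w" "xs s = u" "\<forall>i \<le> s. (v, xs i) \<in> E"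
      "\<forall>i \<in> {1..s}. (xs (i - 1), ys i) \<in> E \<and> (xs i, ys i) \<in> E"
    by blast
  have R: "\<And>i. i \<le> s \<Longrightarrow> (xs 0, xs i) \<in> (approx_rel E v)\<^sup>*"
  proof -
    fix i show "i \<le> s \<Longrightarrow> (xs 0, xs i) \<in> (approx_rel E v)\<^sup>*"
    proof (induction i)
      case 0 then show ?case by simp
    next
      case (Suc i)
      have le: "i \<le> s" using Suc.prems by simp
      have a: "(v, xs i) \<in> E" "(v, xs (Suc i)) \<in> E" using X(3)[rule_format, OF le] X(3)[rule_format, OF Suc.prems] by simp_all
      have "Suc i \<in> {1..s}" using Suc.prems by simp
      then have b: "(xs i, ys (Suc i)) \<in> E \<and> (xs (Suc i), ys (Suc i)) \<in> E" using X(4)[rule_format, of "Suc i"] by simp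
      have st: "(xs i, xs (Suc i)) \<in> approx_rel E v"
        using a b unfolding approx_rel_def succs_def by blast
      have "(xs 0, xs i) \<in> (approx_rel E v)\<^sup>*" using Suc.IH le by simp
      then show ?case using st by (rule rtrancl_into_rtrancl)
    qed
  qed
  have "(xs 0, xs s) \<in> (approx_rel E v)\<^sup>*" using R[of s] by simp
  then show "(w, u) \<in> (approx_rel E v)\<^sup>*" using X(1,2) by simp
qed (simp_all)

lemma valid_two_edges:
  assumes "valid V E star \<pi>" "hd \<pi> = v" "2 < length \<pi>"
  shows "(v, \<pi> ! 1) \<in> E" "(\<pi> ! 1, \<pi> ! 2) \<in> E"
proof -
  have vp: "vertex_path V E \<pi>" using assms(1) unfolding valid_def by simp
  have "\<pi> \<noteq> []" using assms(3) by auto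
  then have h: "\<pi> ! 0 = v" using assms(2) by (simp add: hd_conv_nth[symmetric])
  have "(\<pi> ! 0, \<pi> ! Suc 0) \<in> E" using vp assms(3) unfolding vertex_path_def by simp
  then show "(v, \<pi> ! 1) \<in> E" using h by simp
  have "(\<pi> ! 1, \<pi> ! Suc 1) \<in> E" using vp assms(3) unfolding vertex_path_def by simp
  then show "(\<pi> ! 1, \<pi> ! 2) \<in> E" by (simp add: numeral_2_eq_2)
qed

lemma iii_imp_unif:
  assumes lg: "layered_graph V E lvl star"
    and H3: "\<forall>p q. vertex_path V E p \<and> vertex_path V E q \<and> length p = length q \<and>
               hd p = hd q \<and> last p = star \<and> last q = star \<longrightarrow>
             (\<exists>\<pi>s. \<pi>s \<noteq> [] \<and> hd \<pi>s = p \<and> last \<pi>s = q \<and>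
                (\<forall>\<pi> \<in> set \<pi>s. vertex_path V E \<pi> \<and> hd \<pi> = hd p \<and> last \<pi> = star) \<and>
                (\<forall>i. Suc i < length \<pi>s \<longrightarrow> differ_at_most_one (\<pi>s ! i) (\<pi>s ! Suc i)))"
  shows "uniform V E lvl"
  unfolding uniform_def sim_rel_def
proof (intro ballI impI conjI)
  note L = lg_facts[OF lg]
  fix v w u assume v: "v \<in> V" and lv: "2 \<le> lvl v" and w: "w \<in> succs E v" and u: "u \<in> succs E v"
  have vw: "(v, w) \<in> E" "(v, u) \<in> E" using w u unfolding succs_def by simp_all
  have "w \<in> V" using L(5)[OF vw(1)] by simp
  then obtain rw where rw: "valid V E star rw" "hd rw = w" using valid_exists[OF lg, of w] by blast
  have "u \<in> V" using L(5)[OF vw(2)] by simp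
  then obtain ru where ru: "valid V E star ru" "hd ru = u" using valid_exists[OF lg, of u] by blast
  have nw: "rw \<noteq> []" using valid_ne[OF rw(1)] .
  have nu: "ru \<noteq> []" using valid_ne[OF ru(1)] .
  define p where "p = v # rw"
  define q where "q = v # ru"
  have vpq: "valid V E star p" "valid V E star q" unfolding p_def q_def
    using nw nu rw ru v vw by (simp_all add: valid_cons)
  have lp: "length p = Suc (lvl v)" using valid_length[OF lg vpq(1)] unfolding p_def by simp
  have lq: "length q = Suc (lvl v)" using valid_length[OF lg vpq(2)] unfolding q_def by simp
  have "vertex_path V E p" "vertex_path V E q" "last p = star" "last q = star"
    using vpq unfolding valid_def by simp_all
  moreover have "hd p = hd q" unfolding p_def q_def by simp
  ultimately have pre: "vertex_path V E p \<and> vertex_path V E q \<and> length p = length q \<and>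
               hd p = hd q \<and> last p = star \<and> last q = star" using lp lq by simp
  have ex: "\<exists>\<pi>s. \<pi>s \<noteq> [] \<and> hd \<pi>s = p \<and> last \<pi>s = q \<and>
                (\<forall>\<pi> \<in> set \<pi>s. vertex_path V E \<pi> \<and> hd \<pi> = hd p \<and> last \<pi> = star) \<and>
                (\<forall>i. Suc i < length \<pi>s \<longrightarrow> differ_at_most_one (\<pi>s ! i) (\<pi>s ! Suc i))"
    using H3[rule_format, OF pre] .
  then obtain \<pi>s where P: "\<pi>s \<noteq> []" "hd \<pi>s = p" "last \<pi>s = q"
      "\<forall>\<pi> \<in> set \<pi>s. vertex_path V E \<pi> \<and> hd \<pi> = hd p \<and> last \<pi> = star"
      "\<forall>i. Suc i < length \<pi>s \<longrightarrow> differ_at_most_one (\<pi>s ! i) (\<pi>s ! Suc i)"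
    by blast
  have mem: "\<And>\<pi>. \<pi> \<in> set \<pi>s \<Longrightarrow> valid V E star \<pi> \<and> hd \<pi> = v \<and> length \<pi> = Suc (lvl v)"
  proof -
    fix \<pi> assume "\<pi> \<in> set \<pi>s"
    then have a: "vertex_path V E \<pi>" "hd \<pi> = v" "last \<pi> = star" using P(4) unfolding p_def by auto
    then have "valid V E star \<pi>" unfolding valid_def by simp
    then show "valid V E star \<pi> \<and> hd \<pi> = v \<and> length \<pi> = Suc (lvl v)"
      using valid_length[OF lg] a(2) by simp
  qed
  have R: "\<And>i. i < length \<pi>s \<Longrightarrow> ((\<pi>s ! 0) ! 1, (\<pi>s ! i) ! 1) \<in> (approx_rel E v)\<^sup>*"
  proof -
    fix i show "i < length \<pi>s \<Longrightarrow> ((\<pi>s ! 0) ! 1, (\<pi>s ! i) ! 1) \<in> (approx_rel E v)\<^sup>*"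
    proof (induction i)
      case 0 then show ?case by simp
    next
      case (Suc i)
      define a where "a = \<pi>s ! i"
      define b where "b = \<pi>s ! Suc i"
      have ma: "valid V E star a \<and> hd a = v \<and> length a = Suc (lvl v)"
        using mem[of a] Suc.prems unfolding a_def by simp
      have mb: "valid V E star b \<and> hd b = v \<and> length b = Suc (lvl v)"
        using mem[of b] Suc.prems unfolding b_def by simp
      have l2: "2 < length a" "2 < length b" using ma mb lv by simp_all
      have ea: "(v, a ! 1) \<in> E" "(a ! 1, a ! 2) \<in> E" using valid_two_edges[of V E star a v] ma l2 by simp_all
      have eb: "(v, b ! 1) \<in> E" "(b ! 1, b ! 2) \<in> E" using valid_two_edges[of V E star b v] mb l2 by simp_all
      have "differ_at_most_one a b" using P(5) Suc.prems unfolding a_def b_def by simp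
      then have "\<exists>k. \<forall>j<length a. j \<noteq> k \<longrightarrow> a ! j = b ! j" unfolding dam_iff by (rule conjunct2)
      then obtain k where k: "\<forall>j<length a. j \<noteq> k \<longrightarrow> a ! j = b ! j" ..
      have st: "(a ! 1, b ! 1) \<in> (approx_rel E v)\<^sup>*"
      proof (cases "k = 1")
        case True
        then have e2: "a ! 2 = b ! 2" using k[rule_format, of 2] l2 by simp
        have c: "a ! 2 \<in> succs E (a ! 1) \<inter> succs E (b ! 1)" using ea(2) eb(2) e2 unfolding succs_def by simp
        have d: "a ! 1 \<in> succs E v" "b ! 1 \<in> succs E v" unfolding succs_def using ea eb by simp_all
        have "(a ! 1, b ! 1) \<in> approx_rel E v" unfolding approx_rel_def using c d by blast
        then show ?thesis by simp
      next
        case False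
        then have "a ! 1 = b ! 1" using k[rule_format, of 1] l2 by simp
        then show ?thesis by simp
      qed
      have "((\<pi>s ! 0) ! 1, a ! 1) \<in> (approx_rel E v)\<^sup>*" using Suc.IH Suc.prems unfolding a_def by simp
      then show ?case using st unfolding b_def by (rule rtrancl_trans)
    qed
  qed
  have "\<pi>s ! 0 = p" using P(1,2) by (simp add: hd_conv_nth[symmetric])
  moreover have "\<pi>s ! (length \<pi>s - 1) = q" using last_conv_nth[OF P(1)] P(3) by simp
  moreover have "length \<pi>s - 1 < length \<pi>s" using P(1) by simp
  ultimately have "(p ! 1, q ! 1) \<in> (approx_rel E v)\<^sup>*" using R[of "length \<pi>s - 1"] by simp
  moreover have "rw ! 0 = w" "ru ! 0 = u" using rw(2) ru(2) nw nu by (simp_all add: hd_conv_nth[symmetric])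
  then have "p ! 1 = w" "q ! 1 = u" unfolding p_def q_def by simp_all
  ultimately show "(w, u) \<in> (approx_rel E v)\<^sup>*" by simp
qed (simp_all)

theorem mainTheorem5:
  assumes "layered_graph V E lvl star"
  shows "(uniform V E lvl
      \<longleftrightarrow> (\<forall>v x x'. (v, x) \<in> E \<and> (v, x') \<in> E \<longrightarrow>
             (\<exists>(s::nat) (xs::nat \<Rightarrow> 'a) (ys::nat \<Rightarrow> 'a).
                xs 0 = x \<and> xs s = x' \<and> (\<forall>i \<le> s. (v, xs i) \<in> E) \<and>
                (\<forall>i \<in> {1..s}. (xs (i - 1), ys i) \<in> E \<and> (xs i, ys i) \<in> E))))
    \<and> (uniform V E lvl
      \<longleftrightarrow> (\<forall>p q. vertex_path V E p \<and> vertex_path V E q \<and> length p = length q \<and>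
               hd p = hd q \<and> last p = star \<and> last q = star \<longrightarrow>
             (\<exists>\<pi>s. \<pi>s \<noteq> [] \<and> hd \<pi>s = p \<and> last \<pi>s = q \<and>
                (\<forall>\<pi> \<in> set \<pi>s. vertex_path V E \<pi> \<and> hd \<pi> = hd p \<and> last \<pi> = star) \<and>
                (\<forall>i. Suc i < length \<pi>s \<longrightarrow> differ_at_most_one (\<pi>s ! i) (\<pi>s ! Suc i)))))"
proof (intro conjI iffI)
  assume un: "uniform V E lvl"
  show "\<forall>v x x'. (v, x) \<in> E \<and> (v, x') \<in> E \<longrightarrow>
             (\<exists>(s::nat) (xs::nat \<Rightarrow> 'a) (ys::nat \<Rightarrow> 'a).
                xs 0 = x \<and> xs s = x' \<and> (\<forall>i \<le> s. (v, xs i) \<in> E) \<and>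
                (\<forall>i \<in> {1..s}. (xs (i - 1), ys i) \<in> E \<and> (xs i, ys i) \<in> E))"
  proof (intro allI impI)
    fix v x x' assume vx: "(v, x) \<in> E \<and> (v, x') \<in> E"
    show "\<exists>(s::nat) (xs::nat \<Rightarrow> 'a) (ys::nat \<Rightarrow> 'a).
                xs 0 = x \<and> xs s = x' \<and> (\<forall>i \<le> s. (v, xs i) \<in> E) \<and>
                (\<forall>i \<in> {1..s}. (xs (i - 1), ys i) \<in> E \<and> (xs i, ys i) \<in> E)"
      using unif_imp_ii[OF assms un conjunct1[OF vx] conjunct2[OF vx]] .
  qed
next
  assume un: "uniform V E lvl"
  show "\<forall>p q. vertex_path V E p \<and> vertex_path V E q \<and> length p = length q \<and>
               hd p = hd q \<and> last p = star \<and> last q = star \<longrightarrow>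
             (\<exists>\<pi>s. \<pi>s \<noteq> [] \<and> hd \<pi>s = p \<and> last \<pi>s = q \<and>
                (\<forall>\<pi> \<in> set \<pi>s. vertex_path V E \<pi> \<and> hd \<pi> = hd p \<and> last \<pi> = star) \<and>
                (\<forall>i. Suc i < length \<pi>s \<longrightarrow> differ_at_most_one (\<pi>s ! i) (\<pi>s ! Suc i)))"
  proof (intro allI impI)
    fix p q assume h: "vertex_path V E p \<and> vertex_path V E q \<and> length p = length q \<and>
               hd p = hd q \<and> last p = star \<and> last q = star"
    then have vp: "valid V E star p" "valid V E star q" "hd p = hd q" unfolding valid_def by simp_all
    have conn: "(p, q) \<in> (Mv V E star)\<^sup>*" using main_conn[OF assms un vp] .
    show "\<exists>\<pi>s. \<pi>s \<noteq> [] \<and> hd \<pi>s = p \<and> last \<pi>s = q \<and>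
                (\<forall>\<pi> \<in> set \<pi>s. vertex_path V E \<pi> \<and> hd \<pi> = hd p \<and> last \<pi> = star) \<and>
                (\<forall>i. Suc i < length \<pi>s \<longrightarrow> differ_at_most_one (\<pi>s ! i) (\<pi>s ! Suc i))"
      using M_list[OF conn vp(2)] by simp
  qed
next
  assume H: "\<forall>v x x'. (v, x) \<in> E \<and> (v, x') \<in> E \<longrightarrow>
             (\<exists>(s::nat) (xs::nat \<Rightarrow> 'a) (ys::nat \<Rightarrow> 'a).
                xs 0 = x \<and> xs s = x' \<and> (\<forall>i \<le> s. (v, xs i) \<in> E) \<and>
                (\<forall>i \<in> {1..s}. (xs (i - 1), ys i) \<in> E \<and> (xs i, ys i) \<in> E))"
  show "uniform V E lvl" using ii_imp_unif[OF H] .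
next
  assume H: "\<forall>p q. vertex_path V E p \<and> vertex_path V E q \<and> length p = length q \<and>
               hd p = hd q \<and> last p = star \<and> last q = star \<longrightarrow>
             (\<exists>\<pi>s. \<pi>s \<noteq> [] \<and> hd \<pi>s = p \<and> last \<pi>s = q \<and>
                (\<forall>\<pi> \<in> set \<pi>s. vertex_path V E \<pi> \<and> hd \<pi> = hd p \<and> last \<pi> = star) \<and>
                (\<forall>i. Suc i < length \<pi>s \<longrightarrow> differ_at_most_one (\<pi>s ! i) (\<pi>s ! Suc i)))"
  show "uniform V E lvl" using iii_imp_unif[OF assms H] .
qed

end
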